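(* Let $\|\cdot\|_c$ and $\|\cdot\|_s$ be norms on $\mathbb{R}^d$, let $f(x)=\frac12\|x\|_c^2$, and suppose $g(x)=\frac12\|x\|_s^2$ is $L$-smooth with respect to $\|\cdot\|_s$. Let $\ell_{cs}\in(0,1]$ and $u_{cs}\in[1,\infty)$ satisfy $\ell_{cs}\|x\|_c\le\|x\|_s\le u_{cs}\|x\|_c$ for all $x$. For $\mu>0$ define $M(x)=\min_{u\in\mathbb{R}^d}\{f(u)+\frac1\mu g(x-u)\}$. Then: (1) $M$ is convex and $L/\mu$-smooth with respect to $\|\cdot\|_s$; (2) for all $x\in\mathbb{R}^d$, $(1+\mu/u_{cs}^2)M(x)\le f(x)\le(1+\mu/\ell_{cs}^2)M(x)$; (3) there exists a norm $\|\cdot\|_M$ on $\mathbb{R}^d$ such that $M(x)=\frac12\|x\|_M^2$ for all $x$.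
   Context: A convex differentiable function $h:\mathbb{R}^d\to\mathbb{R}$ is $L$-smooth with respect to a norm $\|\cdot\|$ if $h(y)\le h(x)+\langle\nabla h(x),y-x\rangle+\frac L2\|x-y\|^2$ for all $x,y\in\mathbb{R}^d$, where $\langle x,y\rangle=x^\top y$. The function $M$ is the generalized Moreau envelope of $f$ with respect to $g$ (the minimum is attained). *)

theory Defs
  imports "HOL-Analysis.Analysis"
begin

definition is_norm :: "('a::real_vector \<Rightarrow> real) \<Rightarrow> bool" where
  "is_norm N \<longleftrightarrow>
     (\<forall>x. 0 \<le> N x) \<and> (\<forall>x. N x = 0 \<longleftrightarrow> x = 0) \<and>
     (\<forall>c x. N (c *\<^sub>R x) = \<bar>c\<bar> * N x) \<and>
     (\<forall>x y. N (x + y) \<le> N x + N y)"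

text \<open>L-smoothness of a convex differentiable function w.r.t. the norm N;
  the term frechet_derivative h (at x) (y - x) is the inner product of the gradient of h at x with y - x.\<close>
definition smooth_wrt :: "(real^'d \<Rightarrow> real) \<Rightarrow> real \<Rightarrow> (real^'d \<Rightarrow> real) \<Rightarrow> bool" where
  "smooth_wrt N L h \<longleftrightarrow>
     convex_on UNIV h \<and> (\<forall>x. h differentiable (at x)) \<and>
     (\<forall>x y. h y \<le> h x + frechet_derivative h (at x) (y - x) + L / 2 * (N (x - y))\<^sup>2)"

definition moreau_env :: "(real^'d \<Rightarrow> real) \<Rightarrow> (real^'d \<Rightarrow> real) \<Rightarrow> real \<Rightarrow> real^'d \<Rightarrow> real" where
  "moreau_env f g \<mu> x = (INF u. f u + (1 / \<mu>) * g (x - u))"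

end

theory Submission
  imports Defs
begin


lemma nrm_basic:
  assumes "is_norm N"
  shows "N 0 = 0" "N (-x) = N x" "N (x - y) = N (y - x)" "N x \<ge> 0"
    "\<bar>N x - N y\<bar> \<le> N (x - y)" "N (x + y) \<le> N x + N y" "N (c *\<^sub>R x) = \<bar>c\<bar> * N x"
    "N x = 0 \<longleftrightarrow> x = 0"
proof -
  have h: "\<And>c x. N (c *\<^sub>R x) = \<bar>c\<bar> * N x" and t: "\<And>x y. N (x + y) \<le> N x + N y"
    and z: "\<And>x. N x = 0 \<longleftrightarrow> x = 0" and p: "\<And>x. 0 \<le> N x"
    using assms unfolding is_norm_def by auto
  show "N 0 = 0" using z by simp
  show n: "N (-x) = N x" using h[of "-1" x] by simp
  show "N (x - y) = N (y - x)" using h[of "-1" "x - y"] by simp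
  show "N x \<ge> 0" by (rule p)
  show "N (x + y) \<le> N x + N y" by (rule t)
  show "N (c *\<^sub>R x) = \<bar>c\<bar> * N x" by (rule h)
  show "N x = 0 \<longleftrightarrow> x = 0" by (rule z)
  have 1: "N x \<le> N (x - y) + N y" using t[of "x - y" y] by simp
  have 2: "N y \<le> N (x - y) + N x" using t[of "y - x" x] h[of "-1" "x - y"] by simp
  show "\<bar>N x - N y\<bar> \<le> N (x - y)" using 1 2 by linarith
qed

lemma nrm_sum:
  assumes "is_norm N" "finite A"
  shows "N (sum f A) \<le> (\<Sum>i\<in>A. N (f i))"
  using assms(2)
proof (induction A rule: finite_induct)
  case empty then show ?case using nrm_basic(1)[OF assms(1)] by (metis order_refl sum.empty)
next
  case (insert a A)
  then show ?case using nrm_basic(6)[OF assms(1), of "f a" "sum f A"] by simp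
qed

lemma nrm_upper:
  fixes N :: "'a::euclidean_space \<Rightarrow> real"
  assumes "is_norm N"
  shows "\<exists>K>0. \<forall>x. N x \<le> K * norm x"
proof -
  define K where "K = (\<Sum>b\<in>Basis. N b) + 1"
  have K0: "K > 0" unfolding K_def using nrm_basic(4)[OF assms] by (simp add: sum_nonneg add_nonneg_pos)
  have "N x \<le> K * norm x" for x
  proof -
    have "N x = N (\<Sum>b\<in>Basis. inner x b *\<^sub>R b)" by (simp add: euclidean_representation)
    also have "\<dots> \<le> (\<Sum>b\<in>Basis. N (inner x b *\<^sub>R b))" by (rule nrm_sum[OF assms]) simp
    also have "\<dots> = (\<Sum>b\<in>Basis. \<bar>inner x b\<bar> * N b)" using nrm_basic(7)[OF assms] by simp
    also have "\<dots> \<le> (\<Sum>b\<in>Basis. norm x * N b)"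
      by (rule sum_mono) (simp add: Basis_le_norm mult_right_mono nrm_basic(4)[OF assms])
    also have "\<dots> = norm x * (\<Sum>b\<in>Basis. N b)" by (simp add: sum_distrib_left)
    also have "\<dots> \<le> K * norm x" unfolding K_def by (simp add: algebra_simps)
    finally show ?thesis .
  qed
  then show ?thesis using K0 by blast
qed

lemma nrm_cont:
  fixes N :: "'a::euclidean_space \<Rightarrow> real"
  assumes "is_norm N"
  shows "continuous_on UNIV N"
proof -
  obtain K where K: "K > 0" "\<And>x. N x \<le> K * norm x" using nrm_upper[OF assms] by blast
  show ?thesis unfolding continuous_on_iff
  proof (intro ballI allI impI)
    fix x and e :: real assume e: "e > 0"
    show "\<exists>d>0. \<forall>x'\<in>UNIV. dist x' x < d \<longrightarrow> dist (N x') (N x) < e"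
    proof (intro exI[of _ "e / K"] conjI ballI impI)
      show "e / K > 0" using e K by simp
      fix x' assume "dist x' x < e / K"
      then have "K * norm (x' - x) < e" using K(1) by (simp add: dist_norm field_simps)
      moreover have "\<bar>N x' - N x\<bar> \<le> K * norm (x' - x)" using nrm_basic(5)[OF assms] K(2) order_trans by blast
      ultimately show "dist (N x') (N x) < e" by (simp add: dist_real_def)
    qed
  qed
qed

lemma nrm_lower:
  fixes N :: "'a::euclidean_space \<Rightarrow> real"
  assumes "is_norm N"
  shows "\<exists>m>0. \<forall>x. m * norm x \<le> N x"
proof -
  obtain b :: 'a where b: "b \<in> Basis" by (meson all_not_in_conv nonempty_Basis)
  have ne: "sphere (0::'a) 1 \<noteq> {}" using b by (auto simp: norm_Basis)
  obtain x0 where x0: "x0 \<in> sphere 0 1" "\<And>y. y \<in> sphere 0 1 \<Longrightarrow> N x0 \<le> N y"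
    using continuous_attains_inf[OF compact_sphere ne continuous_on_subset[OF nrm_cont[OF assms]]] by blast
  have m0: "N x0 > 0" using x0(1) nrm_basic(4,8)[OF assms, of x0] by auto
  have "N x0 * norm x \<le> N x" for x
  proof (cases "x = 0")
    case True then show ?thesis using nrm_basic(1)[OF assms] by simp
  next
    case False
    have "N x0 \<le> N ((1 / norm x) *\<^sub>R x)" using x0(2) False by simp
    also have "\<dots> = N x / norm x" using nrm_basic(7)[OF assms] by simp
    finally show ?thesis using False by (simp add: field_simps)
  qed
  then show ?thesis using m0 by blast
qed

lemma sq_convex:
  assumes "is_norm N" "0 \<le> t" "t \<le> 1"
  shows "(N ((1 - t) *\<^sub>R a + t *\<^sub>R b))\<^sup>2 \<le> (1 - t) * (N a)\<^sup>2 + t * (N b)\<^sup>2"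
proof -
  have "N ((1 - t) *\<^sub>R a + t *\<^sub>R b) \<le> (1 - t) * N a + t * N b"
    using nrm_basic(6,7)[OF assms(1)] assms(2,3) by (smt (verit))
  moreover have "0 \<le> N ((1 - t) *\<^sub>R a + t *\<^sub>R b)" using nrm_basic(4)[OF assms(1)] .
  ultimately have "(N ((1 - t) *\<^sub>R a + t *\<^sub>R b))\<^sup>2 \<le> ((1 - t) * N a + t * N b)\<^sup>2"
    by (simp add: power_mono)
  also have "\<dots> \<le> (1 - t) * (N a)\<^sup>2 + t * (N b)\<^sup>2"
  proof -
    have "(1 - t) * (N a)\<^sup>2 + t * (N b)\<^sup>2 - ((1 - t) * N a + t * N b)\<^sup>2 = t * (1 - t) * (N a - N b)\<^sup>2"
      by (simp add: power2_eq_square algebra_simps)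
    moreover have "t * (1 - t) * (N a - N b)\<^sup>2 \<ge> 0" using assms by simp
    ultimately show ?thesis by linarith
  qed
  finally show ?thesis .
qed




locale ctx =
  fixes Nc Ns :: "real^'d \<Rightarrow> real" and L lcs ucs \<mu> :: real
  assumes Nc: "is_norm Nc" and Ns: "is_norm Ns"
    and sm: "smooth_wrt Ns L (\<lambda>x. 1/2 * (Ns x)\<^sup>2)"
    and l0: "0 < lcs" and l1: "lcs \<le> 1" and u1: "1 \<le> ucs"
    and eq: "\<forall>x. lcs * Nc x \<le> Ns x \<and> Ns x \<le> ucs * Nc x"
    and mu: "0 < \<mu>"
begin

abbreviation "F x u \<equiv> 1/2 * (Nc u)\<^sup>2 + 1 / \<mu> * (1/2 * (Ns (x - u))\<^sup>2)"
abbreviation "M \<equiv> moreau_env (\<lambda>x. 1/2 * (Nc x)\<^sup>2) (\<lambda>x. 1/2 * (Ns x)\<^sup>2) \<mu>"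

lemma cont_comp: fixes N :: "'a::euclidean_space \<Rightarrow> real" assumes "is_norm N" "continuous_on S h" shows "continuous_on S (\<lambda>u. N (h u))"
  using continuous_on_compose2[OF nrm_cont[OF assms(1)] assms(2)] by simp

lemma F_nonneg: "F x u \<ge> 0" using mu by simp

lemma minimizer: "\<exists>u. M x = F x u \<and> (\<forall>v. F x u \<le> F x v)"
proof -
  have cF: "continuous_on A (F x)" for A
  proof -
    have c1: "continuous_on A Nc" using continuous_on_subset[OF nrm_cont[OF Nc]] by blast
    have c2: "continuous_on A (\<lambda>u. Ns (x - u))"
      by (rule cont_comp[OF Ns]) (intro continuous_on_diff continuous_on_const continuous_on_id)
    show ?thesis using c1 c2
      by (intro continuous_on_add continuous_on_mult continuous_on_const continuous_on_power)
  qed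
  obtain m where m: "m > 0" "\<And>u. m * norm u \<le> Nc u" using nrm_lower[OF Nc] by blast
  define S where "S = {u. F x u \<le> F x 0}"
  have cl: "closed S" unfolding S_def by (rule closed_Collect_le[OF cF continuous_on_const])
  have bd: "bounded S" unfolding bounded_iff
  proof (intro exI ballI)
    fix u assume "u \<in> S"
    then have a: "F x u \<le> F x 0" unfolding S_def by simp
    have "0 \<le> 1 / \<mu> * (1/2 * (Ns (x - u))\<^sup>2)" using mu by simp
    then have "1/2 * (Nc u)\<^sup>2 \<le> F x 0" using a by linarith
    moreover have "(m * norm u)\<^sup>2 \<le> (Nc u)\<^sup>2" using m by (simp add: power_mono)
    ultimately have h: "m\<^sup>2 * (norm u)\<^sup>2 \<le> 2 * F x 0" by (simp add: power_mult_distrib)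
    show "norm u \<le> 1 + 2 * F x 0 / m\<^sup>2"
    proof (cases "norm u \<le> 1")
      case True
      have "2 * F x 0 / m\<^sup>2 \<ge> 0"
        by (rule divide_nonneg_pos[OF mult_nonneg_nonneg[OF _ F_nonneg]]) (use m(1) in auto)
      then show ?thesis using True by linarith
    next
      case False
      then have "1 \<le> norm u" by simp
      then have "norm u \<le> (norm u)\<^sup>2" unfolding power2_eq_square by (metis mult_1 mult_right_mono norm_ge_zero)
      also have "\<dots> \<le> 2 * F x 0 / m\<^sup>2" using h m by (simp add: field_simps)
      finally show ?thesis by simp
    qed
  qed
  have cp: "compact S" using cl bd compact_eq_bounded_closed by blast
  have "0 \<in> S" unfolding S_def by simp
  then have ne: "S \<noteq> {}" by blast
  obtain u where u: "u \<in> S" "\<And>v. v \<in> S \<Longrightarrow> F x u \<le> F x v"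
    using continuous_attains_inf[OF cp ne cF] by blast
  have all: "F x u \<le> F x v" for v
  proof (cases "v \<in> S")
    case True then show ?thesis using u by blast
  next
    case False then have "F x 0 < F x v" unfolding S_def by simp
    moreover have "F x u \<le> F x 0" using u(1) unfolding S_def by simp
    ultimately show ?thesis by simp
  qed
  have "M x = F x u" unfolding moreau_env_def
    by (rule cInf_eq_minimum) (use all in auto)
  then show ?thesis using all by blast
qed

lemma M_le: "M x \<le> F x v" using minimizer[of x] by auto

lemma M_nonneg: "M x \<ge> 0" using minimizer[of x] F_nonneg by fastforce

end



context ctx begin

lemma M_convex: "convex_on UNIV M"
proof (rule convex_onI)
  fix t :: real and x y :: "real^'d" assume t: "0 < t" "t < 1"
  obtain ux where ux: "M x = F x ux" using minimizer by blast
  obtain uy where uy: "M y = F y uy" using minimizer by blast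
  define u where "u = (1 - t) *\<^sub>R ux + t *\<^sub>R uy"
  have e: "(1 - t) *\<^sub>R x + t *\<^sub>R y - u = (1 - t) *\<^sub>R (x - ux) + t *\<^sub>R (y - uy)"
    unfolding u_def by (simp add: algebra_simps)
  have A: "(Nc u)\<^sup>2 \<le> (1 - t) * (Nc ux)\<^sup>2 + t * (Nc uy)\<^sup>2"
    unfolding u_def using sq_convex[OF Nc] t by simp
  have B: "(Ns ((1 - t) *\<^sub>R x + t *\<^sub>R y - u))\<^sup>2 \<le> (1 - t) * (Ns (x - ux))\<^sup>2 + t * (Ns (y - uy))\<^sup>2"
    unfolding e using sq_convex[OF Ns] t by simp
  have B': "1 / \<mu> * (1/2 * (Ns ((1 - t) *\<^sub>R x + t *\<^sub>R y - u))\<^sup>2)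
     \<le> 1 / \<mu> * (1/2 * ((1 - t) * (Ns (x - ux))\<^sup>2 + t * (Ns (y - uy))\<^sup>2))"
    using B mu by (intro mult_left_mono) auto
  have R: "(1 - t) * F x ux + t * F y uy = 1/2 * ((1 - t) * (Nc ux)\<^sup>2 + t * (Nc uy)\<^sup>2)
     + 1 / \<mu> * (1/2 * ((1 - t) * (Ns (x - ux))\<^sup>2 + t * (Ns (y - uy))\<^sup>2))"
    using mu by (simp add: field_simps)
  have "M ((1 - t) *\<^sub>R x + t *\<^sub>R y) \<le> F ((1 - t) *\<^sub>R x + t *\<^sub>R y) u" by (rule M_le)
  also have "\<dots> \<le> 1/2 * ((1 - t) * (Nc ux)\<^sup>2 + t * (Nc uy)\<^sup>2)
     + 1 / \<mu> * (1/2 * ((1 - t) * (Ns (x - ux))\<^sup>2 + t * (Ns (y - uy))\<^sup>2))"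
    by (rule add_mono[OF _ B']) (use A in simp)
  also have "\<dots> = (1 - t) * F x ux + t * F y uy" using R by simp
  finally show "M ((1 - t) *\<^sub>R x + t *\<^sub>R y) \<le> (1 - t) * M x + t * M y" using ux uy by simp
qed simp

lemma F_scale: "F (c *\<^sub>R x) (c *\<^sub>R u) = c\<^sup>2 * F x u"
proof -
  have "c *\<^sub>R x - c *\<^sub>R u = c *\<^sub>R (x - u)" by (simp add: scaleR_diff_right)
  then have 1: "Ns (c *\<^sub>R x - c *\<^sub>R u) = \<bar>c\<bar> * Ns (x - u)" by (simp only: nrm_basic(7)[OF Ns])
  have 2: "Nc (c *\<^sub>R u) = \<bar>c\<bar> * Nc u" by (simp only: nrm_basic(7)[OF Nc])
  show ?thesis unfolding 1 2 by (simp add: power_mult_distrib algebra_simps)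
qed

lemma M_zero: "M 0 = 0"
proof -
  have "M 0 \<le> F 0 0" by (rule M_le)
  also have "F 0 0 = 0" using nrm_basic(1)[OF Nc] nrm_basic(1)[OF Ns] by simp
  finally show ?thesis using M_nonneg[of 0] by linarith
qed

lemma M_scale_le: "M (c *\<^sub>R x) \<le> c\<^sup>2 * M x"
proof -
  obtain u where u: "M x = F x u" using minimizer by blast
  show ?thesis using M_le[of "c *\<^sub>R x" "c *\<^sub>R u"] F_scale u by simp
qed

lemma M_scale: "M (c *\<^sub>R x) = c\<^sup>2 * M x"
proof -
  have le: "M (c *\<^sub>R x) \<le> c\<^sup>2 * M x" by (rule M_scale_le)
  show ?thesis
  proof (cases "c = 0")
    case True then show ?thesis using M_zero by simp
  next
    case False
    have xx: "(1 / c) *\<^sub>R (c *\<^sub>R x) = x" using False by simp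
    have "M ((1 / c) *\<^sub>R (c *\<^sub>R x)) \<le> (1 / c)\<^sup>2 * M (c *\<^sub>R x)" by (rule M_scale_le)
    then have "M x \<le> (1 / c)\<^sup>2 * M (c *\<^sub>R x)" unfolding xx .
    then have "c\<^sup>2 * M x \<le> c\<^sup>2 * ((1 / c)\<^sup>2 * M (c *\<^sub>R x))" by (simp add: mult_left_mono)
    also have "\<dots> = M (c *\<^sub>R x)" using False by (simp add: power_divide)
    finally show ?thesis using le by linarith
  qed
qed

lemma upper: "(1 + \<mu> / ucs\<^sup>2) * M x \<le> 1/2 * (Nc x)\<^sup>2"
proof -
  define K where "K = ucs\<^sup>2"
  have K0: "K > 0" unfolding K_def using u1 by simp
  define a where "a = K / (\<mu> + K)"
  define b where "b = \<mu> / (\<mu> + K)"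
  have a0: "a \<ge> 0" "b \<ge> 0" unfolding a_def b_def using K0 mu by auto
  have xd: "x - a *\<^sub>R x = b *\<^sub>R x"
  proof -
    have "1 - a = b" unfolding a_def b_def using K0 mu by (simp add: field_simps)
    moreover have "x - a *\<^sub>R x = (1 - a) *\<^sub>R x" by (simp add: scaleR_diff_left)
    ultimately show ?thesis by simp
  qed
  have s2: "(Ns x)\<^sup>2 \<le> K * (Nc x)\<^sup>2"
  proof -
    have "Ns x \<le> ucs * Nc x" using eq by blast
    moreover have "0 \<le> Ns x" using nrm_basic(4)[OF Ns] .
    ultimately have "(Ns x)\<^sup>2 \<le> (ucs * Nc x)\<^sup>2" by (simp add: power_mono)
    then show ?thesis unfolding K_def by (simp add: power_mult_distrib)
  qed
  have Fe: "F x (a *\<^sub>R x) = 1/2 * a\<^sup>2 * (Nc x)\<^sup>2 + 1/\<mu> * (1/2 * b\<^sup>2 * (Ns x)\<^sup>2)"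
    unfolding xd using a0 by (simp add: nrm_basic(7)[OF Nc] nrm_basic(7)[OF Ns] power_mult_distrib)
  have "1/\<mu> * (1/2 * b\<^sup>2 * (Ns x)\<^sup>2) \<le> 1/\<mu> * (1/2 * b\<^sup>2 * (K * (Nc x)\<^sup>2))"
    using s2 mu by (intro mult_left_mono) auto
  then have "M x \<le> 1/2 * a\<^sup>2 * (Nc x)\<^sup>2 + 1/\<mu> * (1/2 * b\<^sup>2 * (K * (Nc x)\<^sup>2))"
    using M_le[of x "a *\<^sub>R x"] Fe by linarith
  also have "\<dots> = 1/2 * (Nc x)\<^sup>2 * (a\<^sup>2 + b\<^sup>2 * K / \<mu>)" by (simp add: algebra_simps)
  finally have m: "M x \<le> 1/2 * (Nc x)\<^sup>2 * (a\<^sup>2 + b\<^sup>2 * K / \<mu>)" .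
  have one: "(1 + \<mu> / K) * (a\<^sup>2 + b\<^sup>2 * K / \<mu>) = 1"
  proof -
    have pk: "\<mu> + K \<noteq> 0" "K \<noteq> 0" "\<mu> \<noteq> 0" using K0 mu by auto
    have ad: "a * (\<mu> + K) = K" unfolding a_def using pk by simp
    have bd: "b * (\<mu> + K) = \<mu>" unfolding b_def using pk by simp
    have ab: "a + b = 1" unfolding a_def b_def using pk by (simp add: add_divide_distrib[symmetric])
    have "(1 + \<mu> / K) * (a\<^sup>2 + b\<^sup>2 * K / \<mu>) = a * (a * (\<mu> + K)) / K + b * (b * (\<mu> + K)) / \<mu>"
      using pk by (simp add: field_simps power2_eq_square)
    also have "\<dots> = a + b" unfolding ad bd using pk by simp
    finally show ?thesis using ab by simp
  qed
  have "(1 + \<mu> / K) * M x \<le> (1 + \<mu> / K) * (1/2 * (Nc x)\<^sup>2 * (a\<^sup>2 + b\<^sup>2 * K / \<mu>))"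
    using m K0 mu by (intro mult_left_mono) auto
  also have "\<dots> = 1/2 * (Nc x)\<^sup>2 * ((1 + \<mu> / K) * (a\<^sup>2 + b\<^sup>2 * K / \<mu>))"
    by (rule mult.left_commute)
  also have "\<dots> = 1/2 * (Nc x)\<^sup>2" unfolding one by simp
  finally show ?thesis unfolding K_def .
qed

lemma lower: "1/2 * (Nc x)\<^sup>2 \<le> (1 + \<mu> / lcs\<^sup>2) * M x"
proof -
  obtain u where u: "M x = F x u" using minimizer by blast
  define a where "a = Nc u"
  define b where "b = Nc (x - u)"
  have ab: "a \<ge> 0" "b \<ge> 0" unfolding a_def b_def using nrm_basic(4)[OF Nc] by auto
  have tri: "Nc x \<le> a + b" unfolding a_def b_def using nrm_basic(6)[OF Nc, of u "x - u"] by simp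
  have "lcs * b \<le> Ns (x - u)" unfolding b_def using eq by blast
  then have "(lcs * b)\<^sup>2 \<le> (Ns (x - u))\<^sup>2" using ab l0 by (intro power_mono) auto
  then have "1/\<mu> * (1/2 * (lcs\<^sup>2 * b\<^sup>2)) \<le> 1/\<mu> * (1/2 * (Ns (x - u))\<^sup>2)"
    using mu by (intro mult_left_mono) (auto simp: power_mult_distrib)
  then have Fg: "1/2 * (a\<^sup>2 + lcs\<^sup>2 / \<mu> * b\<^sup>2) \<le> M x" unfolding u a_def by (simp add: algebra_simps)
  have eqn: "(1 + \<mu> / lcs\<^sup>2) * (a\<^sup>2 + lcs\<^sup>2 / \<mu> * b\<^sup>2) - (a + b)\<^sup>2 = (a - lcs\<^sup>2 / \<mu> * b)\<^sup>2 * (\<mu> / lcs\<^sup>2)"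
    using l0 mu by (simp add: field_simps power2_eq_square)
  have "0 \<le> (a - lcs\<^sup>2 / \<mu> * b)\<^sup>2 * (\<mu> / lcs\<^sup>2)" using l0 mu by simp
  then have k: "(a + b)\<^sup>2 \<le> (1 + \<mu> / lcs\<^sup>2) * (a\<^sup>2 + lcs\<^sup>2 / \<mu> * b\<^sup>2)" using eqn by linarith
  have "(Nc x)\<^sup>2 \<le> (a + b)\<^sup>2" using tri nrm_basic(4)[OF Nc] by (intro power_mono) auto
  also note k
  also have "(1 + \<mu> / lcs\<^sup>2) * (a\<^sup>2 + lcs\<^sup>2 / \<mu> * b\<^sup>2) \<le> (1 + \<mu> / lcs\<^sup>2) * (2 * M x)"
    using Fg mu l0 by (intro mult_left_mono) auto
  finally have "(Nc x)\<^sup>2 \<le> (1 + \<mu> / lcs\<^sup>2) * (2 * M x)" .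
  moreover have "(1 + \<mu> / lcs\<^sup>2) * (2 * M x) = 2 * ((1 + \<mu> / lcs\<^sup>2) * M x)" by simp
  ultimately have h: "(Nc x)\<^sup>2 \<le> 2 * ((1 + \<mu> / lcs\<^sup>2) * M x)" by (rule ord_le_eq_trans)
  define P where "P = (1 + \<mu> / lcs\<^sup>2) * M x"
  have h': "(Nc x)\<^sup>2 \<le> 2 * P" using h unfolding P_def .
  show ?thesis unfolding P_def[symmetric] using h' by linarith
qed

end



context ctx begin

lemma M_pos: "M x = 0 \<Longrightarrow> x = 0"
proof -
  assume "M x = 0"
  then have "1/2 * (Nc x)\<^sup>2 \<le> 0" using lower[of x] by simp
  then have "Nc x = 0" by simp
  then show "x = 0" using nrm_basic(8)[OF Nc] by blast
qed

lemma M_norm: "is_norm (\<lambda>x. sqrt (2 * M x))"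
  unfolding is_norm_def
proof (intro conjI allI)
  fix x
  show "0 \<le> sqrt (2 * M x)" using M_nonneg by simp
  show "(sqrt (2 * M x) = 0) = (x = 0)" using M_pos M_zero by auto
next
  fix c x
  have "2 * M (c *\<^sub>R x) = c\<^sup>2 * (2 * M x)" unfolding M_scale[of c x] by (simp add: algebra_simps)
  then have "sqrt (2 * M (c *\<^sub>R x)) = sqrt (c\<^sup>2 * (2 * M x))" by simp
  also have "\<dots> = \<bar>c\<bar> * sqrt (2 * M x)" by (simp add: real_sqrt_mult)
  finally show "sqrt (2 * M (c *\<^sub>R x)) = \<bar>c\<bar> * sqrt (2 * M x)" .
next
  fix x y
  define s where "s = sqrt (2 * M x)"
  define t where "t = sqrt (2 * M y)"
  show "sqrt (2 * M (x + y)) \<le> sqrt (2 * M x) + sqrt (2 * M y)"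
  proof (cases "x = 0 \<or> y = 0")
    case True then show ?thesis using M_nonneg by auto
  next
    case False
    have "M x \<noteq> 0" using False M_pos[of x] by blast
    then have "M x > 0" using M_nonneg[of x] by linarith
    then have s0: "s > 0" unfolding s_def by simp
    have "M y \<noteq> 0" using False M_pos[of y] by blast
    then have "M y > 0" using M_nonneg[of y] by linarith
    then have t0: "t > 0" unfolding t_def by simp
    have Mx: "M x = s\<^sup>2 / 2" unfolding s_def using M_nonneg[of x] by simp
    have My: "M y = t\<^sup>2 / 2" unfolding t_def using M_nonneg[of y] by simp
    have Mxs: "M ((1 / s) *\<^sub>R x) = 1/2" using M_scale Mx s0 by (simp add: power_divide)
    have Mys: "M ((1 / t) *\<^sub>R y) = 1/2" using M_scale My t0 by (simp add: power_divide)
    define \<tau> where "\<tau> = t / (s + t)"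
    have \<tau>: "0 \<le> \<tau>" "\<tau> \<le> 1" unfolding \<tau>_def using s0 t0 by auto
    have cv: "M ((1 - \<tau>) *\<^sub>R ((1 / s) *\<^sub>R x) + \<tau> *\<^sub>R ((1 / t) *\<^sub>R y))
       \<le> (1 - \<tau>) * M ((1 / s) *\<^sub>R x) + \<tau> * M ((1 / t) *\<^sub>R y)"
      by (rule convex_onD[OF M_convex \<tau>]) auto
    have c1: "(1 - \<tau>) * (1 / s) = 1 / (s + t)" unfolding \<tau>_def using s0 t0 by (simp add: field_simps)
    have c2: "\<tau> * (1 / t) = 1 / (s + t)" unfolding \<tau>_def using s0 t0 by (simp add: field_simps)
    have pt: "(1 - \<tau>) *\<^sub>R ((1 / s) *\<^sub>R x) + \<tau> *\<^sub>R ((1 / t) *\<^sub>R y) = (1 / (s + t)) *\<^sub>R (x + y)"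
      by (simp only: scaleR_scaleR c1 c2 scaleR_right_distrib)
    have Mz: "M ((1 / (s + t)) *\<^sub>R (x + y)) \<le> 1/2"
    proof -
      have "(1 - \<tau>) * (1/2) + \<tau> * (1/2) = (1/2::real)" by argo
      then show ?thesis using cv unfolding pt Mxs Mys by argo
    qed
    have xy: "x + y = (s + t) *\<^sub>R ((1 / (s + t)) *\<^sub>R (x + y))" using s0 t0 by simp
    have "M (x + y) = M ((s + t) *\<^sub>R ((1 / (s + t)) *\<^sub>R (x + y)))" using arg_cong[OF xy, of M] .
    also have "\<dots> = (s + t)\<^sup>2 * M ((1 / (s + t)) *\<^sub>R (x + y))" by (rule M_scale)
    also have "\<dots> \<le> (s + t)\<^sup>2 * (1/2)" using Mz by (intro mult_left_mono) auto
    finally have "2 * M (x + y) \<le> (s + t)\<^sup>2" by simp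
    then have "sqrt (2 * M (x + y)) \<le> sqrt ((s + t)\<^sup>2)" by (rule real_sqrt_le_mono)
    also have "\<dots> = s + t" using s0 t0 by simp
    finally show ?thesis unfolding s_def t_def .
  qed
qed

lemma M_deriv: "\<exists>D. (M has_derivative D) (at x) \<and> (\<forall>y. M y \<le> M x + D (y - x) + L / \<mu> / 2 * (Ns (x - y))\<^sup>2)"
proof -
  define G where "G = (\<lambda>z. 1/2 * (Ns z)\<^sup>2)"
  have smG: "\<And>x y. G y \<le> G x + frechet_derivative G (at x) (y - x) + L / 2 * (Ns (x - y))\<^sup>2"
    and dG: "\<And>x. G differentiable (at x)" using sm unfolding smooth_wrt_def G_def by auto
  obtain u where u: "M x = F x u" using minimizer by blast
  define g' where "g' = frechet_derivative G (at (x - u))"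
  have hd: "(G has_derivative g') (at (x - u))" using dG[of "x - u"] unfolding frechet_derivative_works g'_def .
  have bl: "bounded_linear g'" using has_derivative_bounded_linear[OF hd] .
  define D where "D = (\<lambda>h. g' h / \<mu>)"
  have blD: "bounded_linear D" unfolding D_def by (rule bounded_linear_compose[OF bounded_linear_divide bl])
  have Dneg: "D (- h) = - D h" for h using bounded_linear.linear[OF blD] by (simp add: linear_neg)
  have up: "M y \<le> M x + D (y - x) + L / \<mu> / 2 * (Ns (x - y))\<^sup>2" for y
  proof -
    have e1: "(y - u) - (x - u) = y - x" "(x - u) - (y - u) = x - y" by (simp_all add: algebra_simps)
    have "G (y - u) \<le> G (x - u) + g' (y - x) + L / 2 * (Ns (x - y))\<^sup>2"
      using smG[of "y - u" "x - u"] unfolding e1 g'_def .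
    then have "1 / \<mu> * G (y - u) \<le> 1 / \<mu> * (G (x - u) + g' (y - x) + L / 2 * (Ns (x - y))\<^sup>2)"
      using mu by (intro mult_left_mono) auto
    also have "\<dots> = 1 / \<mu> * G (x - u) + D (y - x) + L / \<mu> / 2 * (Ns (x - y))\<^sup>2"
      unfolding D_def using mu by (simp add: field_simps)
    finally have h: "1 / \<mu> * G (y - u) \<le> 1 / \<mu> * G (x - u) + D (y - x) + L / \<mu> / 2 * (Ns (x - y))\<^sup>2" .
    have "M y \<le> F y u" by (rule M_le)
    then show ?thesis using h u unfolding G_def by linarith
  qed
  have absL: "L / \<mu> / 2 * q \<le> \<bar>L\<bar> / \<mu> / 2 * q" if "q \<ge> 0" for q
    using that mu by (intro mult_right_mono divide_right_mono) auto
  have lowb: "M x + D (y - x) - \<bar>L\<bar> / \<mu> / 2 * (Ns (x - y))\<^sup>2 \<le> M y" for y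
  proof -
    define y' where "y' = 2 *\<^sub>R x - y"
    have px: "(1 - 1/2) *\<^sub>R y + (1/2::real) *\<^sub>R y' = x" unfolding y'_def
      by (simp add: algebra_simps scaleR_diff_right)
    have cv: "M x \<le> (1 - 1/2) * M y + 1/2 * M y'"
      using convex_onD[OF M_convex, of "1/2" y y'] unfolding px by simp
    have d1: "y' - x = - (y - x)" "x - y' = y - x" unfolding y'_def by (simp_all add: algebra_simps scaleR_2)
    have "M y' \<le> M x + D (y' - x) + L / \<mu> / 2 * (Ns (x - y'))\<^sup>2" by (rule up)
    also have "\<dots> = M x - D (y - x) + L / \<mu> / 2 * (Ns (x - y))\<^sup>2"
      unfolding d1 Dneg using nrm_basic(3)[OF Ns, of y x] by simp
    finally have h1: "M y' \<le> M x - D (y - x) + L / \<mu> / 2 * (Ns (x - y))\<^sup>2" .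
    have h2: "L / \<mu> / 2 * (Ns (x - y))\<^sup>2 \<le> \<bar>L\<bar> / \<mu> / 2 * (Ns (x - y))\<^sup>2" by (rule absL) simp
    define A where "A = L / \<mu> / 2 * (Ns (x - y))\<^sup>2"
    define B where "B = \<bar>L\<bar> / \<mu> / 2 * (Ns (x - y))\<^sup>2"
    have h1': "M y' \<le> M x - D (y - x) + A" using h1 unfolding A_def .
    have h2': "A \<le> B" using h2 unfolding A_def B_def .
    show ?thesis unfolding B_def[symmetric] using cv h1' h2' by argo
  qed
  obtain K where K: "K > 0" "\<And>z. Ns z \<le> K * norm z" using nrm_upper[OF Ns] by blast
  define C where "C = \<bar>L\<bar> / \<mu> / 2 * K\<^sup>2"
  have C0: "C \<ge> 0" unfolding C_def using mu by simp
  have err: "\<bar>M y - M x - D (y - x)\<bar> \<le> C * (norm (y - x))\<^sup>2" for y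
  proof -
    have "Ns (x - y) \<le> K * norm (y - x)" using K(2)[of "x - y"] by (simp add: norm_minus_commute)
    then have "(Ns (x - y))\<^sup>2 \<le> (K * norm (y - x))\<^sup>2" using nrm_basic(4)[OF Ns] by (intro power_mono) auto
    then have "\<bar>L\<bar> / \<mu> / 2 * (Ns (x - y))\<^sup>2 \<le> \<bar>L\<bar> / \<mu> / 2 * (K * norm (y - x))\<^sup>2"
      using mu by (intro mult_left_mono) auto
    also have "\<dots> = C * (norm (y - x))\<^sup>2" unfolding C_def by (simp add: power_mult_distrib)
    finally have q: "\<bar>L\<bar> / \<mu> / 2 * (Ns (x - y))\<^sup>2 \<le> C * (norm (y - x))\<^sup>2" .
    have h2: "L / \<mu> / 2 * (Ns (x - y))\<^sup>2 \<le> \<bar>L\<bar> / \<mu> / 2 * (Ns (x - y))\<^sup>2" by (rule absL) simp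
    define A where "A = L / \<mu> / 2 * (Ns (x - y))\<^sup>2"
    define B where "B = \<bar>L\<bar> / \<mu> / 2 * (Ns (x - y))\<^sup>2"
    define E where "E = C * (norm (y - x))\<^sup>2"
    have u': "M y \<le> M x + D (y - x) + A" using up[of y] unfolding A_def .
    have l': "M x + D (y - x) - B \<le> M y" using lowb[of y] unfolding B_def .
    have h2': "A \<le> B" using h2 unfolding A_def B_def .
    have q': "B \<le> E" using q unfolding B_def E_def .
    show ?thesis unfolding E_def[symmetric] using u' l' h2' q' by linarith
  qed
  have hasD: "(M has_derivative D) (at x)"
    unfolding has_derivative_iff_norm
  proof (intro conjI blD)
    have n0: "((\<lambda>y. norm (y - x)) \<longlongrightarrow> 0) (at x)"
      using tendsto_norm_zero[OF LIM_zero[OF tendsto_ident_at]] .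
    have lim: "((\<lambda>y. C * norm (y - x)) \<longlongrightarrow> 0) (at x)"
      using tendsto_mult[OF tendsto_const[of C] n0] by simp
    show "((\<lambda>y. norm (M y - M x - D (y - x)) / norm (y - x)) \<longlongrightarrow> 0) (at x)"
    proof (rule Lim_null_comparison[OF always_eventually lim], intro allI)
      fix y
      show "norm (norm (M y - M x - D (y - x)) / norm (y - x)) \<le> C * norm (y - x)"
      proof (cases "y = x")
        case True then show ?thesis by simp
      next
        case False
        then have n0: "norm (y - x) > 0" by simp
        have "\<bar>M y - M x - D (y - x)\<bar> / norm (y - x) \<le> C * (norm (y - x))\<^sup>2 / norm (y - x)"
          using err[of y] n0 by (intro divide_right_mono) auto
        also have "\<dots> = C * norm (y - x)" using n0 by (simp add: power2_eq_square)
        finally show ?thesis by simp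
      qed
    qed
  qed
  show ?thesis by (intro exI[of _ D] conjI hasD allI up)
qed

lemma M_smooth: "smooth_wrt Ns (L / \<mu>) M"
  unfolding smooth_wrt_def
proof (intro conjI allI)
  show "convex_on UNIV M" by (rule M_convex)
next
  fix x
  obtain D where "(M has_derivative D) (at x)" using M_deriv[of x] by blast
  then show "M differentiable (at x)" unfolding differentiable_def by blast
next
  fix x y
  obtain D where D: "(M has_derivative D) (at x)" "\<forall>y. M y \<le> M x + D (y - x) + L / \<mu> / 2 * (Ns (x - y))\<^sup>2"
    using M_deriv[of x] by blast
  have "D = frechet_derivative M (at x)" by (rule frechet_derivative_at[OF D(1)])
  then show "M y \<le> M x + frechet_derivative M (at x) (y - x) + L / \<mu> / 2 * (Ns (x - y))\<^sup>2"
    using D(2) by simp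
qed

end

theorem lemma1:
  fixes Nc Ns :: "real^'d \<Rightarrow> real" and L lcs ucs \<mu> :: real
  assumes "is_norm Nc" and "is_norm Ns"
    and "smooth_wrt Ns L (\<lambda>x. 1/2 * (Ns x)\<^sup>2)"
    and "0 < lcs" and "lcs \<le> 1" and "1 \<le> ucs"
    and "\<forall>x. lcs * Nc x \<le> Ns x \<and> Ns x \<le> ucs * Nc x"
    and "0 < \<mu>"
  shows "smooth_wrt Ns (L / \<mu>) (moreau_env (\<lambda>x. 1/2 * (Nc x)\<^sup>2) (\<lambda>x. 1/2 * (Ns x)\<^sup>2) \<mu>)
    \<and> (\<forall>x. (1 + \<mu> / ucs\<^sup>2) * moreau_env (\<lambda>x. 1/2 * (Nc x)\<^sup>2) (\<lambda>x. 1/2 * (Ns x)\<^sup>2) \<mu> x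
              \<le> 1/2 * (Nc x)\<^sup>2
         \<and> 1/2 * (Nc x)\<^sup>2
              \<le> (1 + \<mu> / lcs\<^sup>2) * moreau_env (\<lambda>x. 1/2 * (Nc x)\<^sup>2) (\<lambda>x. 1/2 * (Ns x)\<^sup>2) \<mu> x)
    \<and> (\<exists>NM. is_norm NM \<and>
         (\<forall>x. moreau_env (\<lambda>x. 1/2 * (Nc x)\<^sup>2) (\<lambda>x. 1/2 * (Ns x)\<^sup>2) \<mu> x = 1/2 * (NM x)\<^sup>2))"
proof -
  interpret ctx Nc Ns L lcs ucs \<mu> using assms by unfold_locales
  have n: "\<forall>x. M x = 1/2 * (sqrt (2 * M x))\<^sup>2" using M_nonneg by simp
  have p2: "\<forall>x. (1 + \<mu> / ucs\<^sup>2) * M x \<le> 1/2 * (Nc x)\<^sup>2 \<and> 1/2 * (Nc x)\<^sup>2 \<le> (1 + \<mu> / lcs\<^sup>2) * M x"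
    using upper lower by blast
  have p3: "\<exists>NM. is_norm NM \<and> (\<forall>x. M x = 1/2 * (NM x)\<^sup>2)"
    by (intro exI[of _ "\<lambda>x. sqrt (2 * M x)"] conjI M_norm) (use n in blast)
  show ?thesis by (intro conjI M_smooth p2 p3)
qed


end
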